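(* Let $W$ be an NDCSE with respect to a closed abelian subgroup $H\subseteq G$, fix $(\eta,i)$, and let $E\subseteq\mathrm{End}(\mathcal H^{\eta,i})$ be a $G$-irreducible submodule isomorphic to the irrep $\lambda$, with a Hilbert–Schmidt orthonormal basis $\{e_\sigma\}$ each element of which is either diagonal in $W$ or has all diagonal entries $\langle w|e_\sigma|w\rangle=0$. Let $D$ be the set of indices $\sigma$ with $e_\sigma$ diagonal, and $\lambda(g)_{\sigma,\tau}=\mathrm{Tr}[e_\sigma^\dagger R(g)e_\tau R(g)^\dagger]$. Then for every $\tau$, $$\int_G\sum_{\sigma\in D}|\lambda(g)_{\sigma,\tau}|^2\,dg=a^H_\lambda=\frac{d^H_\lambda}{d_\lambda}.$$
   Context: $G$ compact group with normalized Haar measure $dg$; $R:G\to\mathsf U(\mathcal H)$ continuous unitary representation, $\dim\mathcal H<\infty$; $G$ acts on $\mathrm{End}(\mathcal H)$ by $X\mapsto R(g)XR(g)^\dagger$. An NDCSE w.r.t. abelian $H\subseteq G$ is an orthonormal basis $W=\bigcup_{\eta,i}W^{\eta,i}$, $W^{\eta,i}$ an orthonormal basis of $\mathcal H^{\eta,i}$ for a decomposition $\mathcal H=\bigoplus\mathcal H^{\eta,i}$ into irreducible $G$-submodules, whose elements are simultaneous eigenvectors of $R(H)$, with each $\mathcal H^{\eta,i}$ multiplicity-free as an $H$-module. $d_\lambda=\dim V^\lambda$, $d^H_\lambda=$ dimension of the $H$-fixed subspace of $V^\lambda$. *)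

theory Defs
  imports "HOL-Analysis.Analysis"
begin

section \<open>Linear algebra on C^n (finite-dimensional Hilbert space)\<close>

definition cinner :: "complex^'n \<Rightarrow> complex^'n \<Rightarrow> complex" where
  "cinner u v = (\<Sum>i\<in>UNIV. cnj (u$i) * v$i)"

definition adj :: "complex^'n^'m \<Rightarrow> complex^'m^'n" where
  "adj A = (\<chi> i j. cnj (A$j$i))"

definition unitary_mat :: "complex^'n^'n \<Rightarrow> bool" where
  "unitary_mat U \<longleftrightarrow> U ** adj U = mat 1 \<and> adj U ** U = mat 1"

definition mscale :: "complex \<Rightarrow> complex^'n^'m \<Rightarrow> complex^'n^'m" where
  "mscale c A = (\<chi> i j. c * A$i$j)"

text \<open>Hilbert-Schmidt inner product Tr(A^dagger B).\<close>
definition hs_inner :: "complex^'n^'n \<Rightarrow> complex^'n^'n \<Rightarrow> complex" where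
  "hs_inner A B = trace (adj A ** B)"

section \<open>Compact groups, Haar measure, closed abelian subgroups\<close>

definition compact_group :: "('g::topological_space \<Rightarrow> 'g \<Rightarrow> 'g) \<Rightarrow> 'g \<Rightarrow> ('g \<Rightarrow> 'g) \<Rightarrow> bool" where
  "compact_group mul e iv \<longleftrightarrow> group mul e iv \<and> compact (UNIV :: 'g set) \<and>
     continuous_on UNIV (\<lambda>p. mul (fst p) (snd p)) \<and> continuous_on UNIV iv"

text \<open>Normalized Haar measure: a left-invariant regular Borel probability measure.\<close>
definition normalized_haar :: "('g::topological_space \<Rightarrow> 'g \<Rightarrow> 'g) \<Rightarrow> 'g measure \<Rightarrow> bool" where
  "normalized_haar mul \<mu> \<longleftrightarrow> sets \<mu> = sets borel \<and> emeasure \<mu> (space \<mu>) = 1 \<and>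
     (\<forall>g. \<forall>A\<in>sets borel. emeasure \<mu> ((mul g) ` A) = emeasure \<mu> A) \<and>
     (\<forall>A\<in>sets borel. emeasure \<mu> A = (INF U\<in>{U. open U \<and> A \<subseteq> U}. emeasure \<mu> U)) \<and>
     (\<forall>U. open U \<longrightarrow> emeasure \<mu> U = (SUP K\<in>{K. compact K \<and> K \<subseteq> U}. emeasure \<mu> K))"

definition closed_abelian_subgroup ::
  "('g::topological_space \<Rightarrow> 'g \<Rightarrow> 'g) \<Rightarrow> 'g \<Rightarrow> ('g \<Rightarrow> 'g) \<Rightarrow> 'g set \<Rightarrow> bool" where
  "closed_abelian_subgroup mul e iv Hs \<longleftrightarrow> closed Hs \<and> e \<in> Hs \<and>
     (\<forall>x\<in>Hs. \<forall>y\<in>Hs. mul x y \<in> Hs) \<and> (\<forall>x\<in>Hs. iv x \<in> Hs) \<and>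
     (\<forall>x\<in>Hs. \<forall>y\<in>Hs. mul x y = mul y x)"

text \<open>Continuous unitary representation G -> U(C^n).\<close>
definition cont_unitary_rep ::
  "('g::topological_space \<Rightarrow> 'g \<Rightarrow> 'g) \<Rightarrow> 'g \<Rightarrow> ('g \<Rightarrow> complex^'n^'n) \<Rightarrow> bool" where
  "cont_unitary_rep mul e R \<longleftrightarrow> (\<forall>g h. R (mul g h) = R g ** R h) \<and> R e = mat 1 \<and>
     (\<forall>g. unitary_mat (R g)) \<and> (\<forall>i j. continuous_on UNIV (\<lambda>g. R g $ i $ j))"

section \<open>Modules for a group action (linear action act of the elements of K)\<close>

definition invariant_subspace ::
  "('c::comm_ring_1 \<Rightarrow> 'v::ab_group_add \<Rightarrow> 'v) \<Rightarrow> ('g \<Rightarrow> 'v \<Rightarrow> 'v) \<Rightarrow> 'g set \<Rightarrow> 'v set \<Rightarrow> bool" where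
  "invariant_subspace sc act K V \<longleftrightarrow> module.subspace sc V \<and> (\<forall>g\<in>K. \<forall>x\<in>V. act g x \<in> V)"

definition irreducible_submodule ::
  "('c::comm_ring_1 \<Rightarrow> 'v::ab_group_add \<Rightarrow> 'v) \<Rightarrow> ('g \<Rightarrow> 'v \<Rightarrow> 'v) \<Rightarrow> 'g set \<Rightarrow> 'v set \<Rightarrow> bool" where
  "irreducible_submodule sc act K V \<longleftrightarrow> invariant_subspace sc act K V \<and> V \<noteq> {0} \<and>
     (\<forall>U. invariant_subspace sc act K U \<and> U \<subseteq> V \<longrightarrow> U = {0} \<or> U = V)"

definition isomorphic_modules ::
  "('c::field \<Rightarrow> 'v::ab_group_add \<Rightarrow> 'v) \<Rightarrow> ('g \<Rightarrow> 'v \<Rightarrow> 'v) \<Rightarrow> 'v set \<Rightarrow>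
   ('c \<Rightarrow> 'w::ab_group_add \<Rightarrow> 'w) \<Rightarrow> ('g \<Rightarrow> 'w \<Rightarrow> 'w) \<Rightarrow> 'w set \<Rightarrow> 'g set \<Rightarrow> bool" where
  "isomorphic_modules s1 a1 V1 s2 a2 V2 K \<longleftrightarrow>
     (\<exists>T. Vector_Spaces.linear s1 s2 T \<and> bij_betw T V1 V2 \<and>
          (\<forall>g\<in>K. \<forall>x\<in>V1. T (a1 g x) = a2 g (T x)))"

text \<open>Multiplicity-free: any two isomorphic irreducible submodules of V coincide.\<close>
definition multiplicity_free ::
  "('c::field \<Rightarrow> 'v::ab_group_add \<Rightarrow> 'v) \<Rightarrow> ('g \<Rightarrow> 'v \<Rightarrow> 'v) \<Rightarrow> 'g set \<Rightarrow> 'v set \<Rightarrow> bool" where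
  "multiplicity_free sc act K V \<longleftrightarrow>
     (\<forall>U1 U2. irreducible_submodule sc act K U1 \<and> U1 \<subseteq> V \<and>
              irreducible_submodule sc act K U2 \<and> U2 \<subseteq> V \<and>
              isomorphic_modules sc act U1 sc act U2 K \<longrightarrow> U1 = U2)"

section \<open>NDCSE\<close>

text \<open>The orthonormal basis W is w : 'n => C^n; blk j is the label (eta,i) of the block
  H^{eta,i} containing w j, so that H^{eta,i} = span {w j | blk j = (eta,i)}.\<close>
definition block_space :: "('n \<Rightarrow> complex^'n) \<Rightarrow> ('n \<Rightarrow> 'k) \<Rightarrow> 'k \<Rightarrow> (complex^'n) set" where
  "block_space w blk k = vec.span (w ` {j. blk j = k})"

definition NDCSE ::
  "('g \<Rightarrow> complex^'n^'n) \<Rightarrow> 'g set \<Rightarrow> ('n \<Rightarrow> complex^'n) \<Rightarrow> ('n \<Rightarrow> 'k) \<Rightarrow> bool" where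
  "NDCSE R Hs w blk \<longleftrightarrow>
     (\<forall>j j'. cinner (w j) (w j') = (if j = j' then 1 else 0)) \<and>
     (\<forall>k\<in>range blk. irreducible_submodule (*s) (\<lambda>g v. R g *v v) UNIV (block_space w blk k)) \<and>
     (\<forall>j. \<forall>h\<in>Hs. \<exists>c. R h *v w j = c *s w j) \<and>
     (\<forall>k\<in>range blk. multiplicity_free (*s) (\<lambda>g v. R g *v v) Hs (block_space w blk k))"

text \<open>End(H^{eta,i}) realised as the operators on H that preserve H^{eta,i} and vanish on
  its orthogonal complement (spanned by the other basis vectors).\<close>
definition End_block :: "('n \<Rightarrow> complex^'n) \<Rightarrow> ('n \<Rightarrow> 'k) \<Rightarrow> 'k \<Rightarrow> (complex^'n^'n) set" where
  "End_block w blk k = {X. (\<forall>v\<in>block_space w blk k. X *v v \<in> block_space w blk k) \<and>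
                            (\<forall>j. blk j \<noteq> k \<longrightarrow> X *v w j = 0)}"

definition conj_action :: "('g \<Rightarrow> complex^'n^'n) \<Rightarrow> 'g \<Rightarrow> complex^'n^'n \<Rightarrow> complex^'n^'n" where
  "conj_action R g X = R g ** X ** adj (R g)"

definition diagonal_in :: "('n \<Rightarrow> complex^'n) \<Rightarrow> ('n \<Rightarrow> 'k) \<Rightarrow> 'k \<Rightarrow> complex^'n^'n \<Rightarrow> bool" where
  "diagonal_in w blk k X \<longleftrightarrow>
     (\<forall>j j'. blk j = k \<and> blk j' = k \<and> j \<noteq> j' \<longrightarrow> cinner (w j) (X *v w j') = 0)"

definition zero_diagonal_in :: "('n \<Rightarrow> complex^'n) \<Rightarrow> ('n \<Rightarrow> 'k) \<Rightarrow> 'k \<Rightarrow> complex^'n^'n \<Rightarrow> bool" where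
  "zero_diagonal_in w blk k X \<longleftrightarrow> (\<forall>j. blk j = k \<longrightarrow> cinner (w j) (X *v w j) = 0)"

text \<open>d^H_lambda: dimension of the H-fixed subspace of the irrep space.\<close>
definition fixed_dim :: "('g \<Rightarrow> complex^'d^'d) \<Rightarrow> 'g set \<Rightarrow> nat" where
  "fixed_dim \<rho> Hs = vec.dim {v :: complex^'d. \<forall>h\<in>Hs. \<rho> h *v v = v}"

end

theory Submission
  imports Defs "Jordan_Normal_Form.Spectral_Radius"
begin

hide_const (open) Matrix.mat
lemma ex_eigen:
  fixes M :: "'s::finite \<Rightarrow> 's \<Rightarrow> complex"
  shows "\<exists>v l. (\<exists>i. v i \<noteq> 0) \<and> (\<forall>i. (\<Sum>j\<in>UNIV. M i j * v j) = l * v i)"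
proof -
  define n where "n = CARD('s)"
  have n0: "n > 0" unfolding n_def by simp
  obtain h :: "nat \<Rightarrow> 's" where h: "bij_betw h {0..<n} UNIV"
    using ex_bij_betw_nat_finite[of "UNIV :: 's set"] unfolding n_def by auto
  define A where "A = Matrix.mat n n (\<lambda>(i,j). M (h i) (h j))"
  have A: "A \<in> carrier_mat n n" unfolding A_def by auto
  from spectrum_non_empty[OF A n0] obtain l where "eigenvalue A l"
    unfolding spectrum_def by auto
  then obtain u where u: "eigenvector A u l" unfolding eigenvalue_def by auto
  have du: "dim_vec u = n" and un: "u \<noteq> 0\<^sub>v n" and eq: "A *\<^sub>v u = l \<cdot>\<^sub>v u"
    using u A unfolding eigenvector_def by auto
  define hi where "hi = inv_into {0..<n} h"
  have hi1: "hi s < n" for s using h unfolding hi_def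
    by (metis atLeastLessThan_iff bij_betw_def inv_into_into UNIV_I)
  have hi2: "h (hi s) = s" for s using h unfolding hi_def
    by (simp add: bij_betw_inv_into_right)
  have hi3: "i < n \<Longrightarrow> hi (h i) = i" for i using h unfolding hi_def
    by (simp add: bij_betw_inv_into_left)
  define v where "v s = vec_index u (hi s)" for s
  have "\<exists>i. v i \<noteq> 0"
  proof (rule ccontr)
    assume "\<not> (\<exists>i. v i \<noteq> 0)"
    hence v0: "v = (\<lambda>_. 0)" by auto
    have "u = 0\<^sub>v n"
    proof (rule eq_vecI)
      fix i assume "i < dim_vec (0\<^sub>v n :: complex Matrix.vec)"
      hence i: "i < n" by simp
      have "vec_index u i = v (h i)" unfolding v_def using hi3[OF i] by simp
      thus "vec_index u i = vec_index (0\<^sub>v n) i" using v0 i by simp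
    qed (simp add: du)
    with un show False by simp
  qed
  moreover have "(\<Sum>j\<in>UNIV. M s j * v j) = l * v s" for s
  proof -
    have "vec_index (A *\<^sub>v u) (hi s) = vec_index (l \<cdot>\<^sub>v u) (hi s)" using eq by simp
    hence "Matrix.scalar_prod (row A (hi s)) u = l * vec_index u (hi s)" using hi1 A du by simp
    moreover have "Matrix.scalar_prod (row A (hi s)) u = (\<Sum>j<n. M s (h j) * vec_index u j)"
      unfolding scalar_prod_def using hi1[of s] du hi2
      by (auto simp: A_def lessThan_atLeast0 intro!: sum.cong)
    moreover have "(\<Sum>j<n. M s (h j) * vec_index u j) = (\<Sum>j\<in>UNIV. M s j * v j)"
    proof -
      have "(\<Sum>j\<in>UNIV. M s j * v j) = (\<Sum>j\<in>{0..<n}. M s (h j) * v (h j))"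
        using sum.reindex_bij_betw[OF h, of "\<lambda>j. M s j * v j"] by simp
      also have "\<dots> = (\<Sum>j<n. M s (h j) * vec_index u j)"
        by (auto simp: v_def hi3 lessThan_atLeast0 intro!: sum.cong)
      finally show ?thesis by simp
    qed
    ultimately show ?thesis by (simp add: v_def)
  qed
  ultimately show ?thesis by blast
qed

no_notation Matrix.vec_index (infixl \<open>$\<close> 100)

section \<open>Hilbert-Schmidt inner product and mscale\<close>

lemma hs_inner_sum:
  "hs_inner A B = (\<Sum>i\<in>UNIV. \<Sum>j\<in>UNIV. cnj (A$i$j) * B$i$j)"
proof -
  have "hs_inner A B = (\<Sum>j\<in>UNIV. \<Sum>i\<in>UNIV. cnj (A$i$j) * B$i$j)"
    by (simp add: hs_inner_def Determinants.trace_def matrix_matrix_mult_def adj_def)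
  also have "\<dots> = (\<Sum>i\<in>UNIV. \<Sum>j\<in>UNIV. cnj (A$i$j) * B$i$j)"
    by (rule sum.swap)
  finally show ?thesis .
qed

lemma mscale_nth[simp]: "mscale c A $ i $ j = c * A $ i $ j"
  by (simp add: mscale_def)

lemma module_mscale: "Modules.module (mscale :: complex \<Rightarrow> complex^'n^'m \<Rightarrow> complex^'n^'m)"
  by unfold_locales (auto simp: Finite_Cartesian_Product.vec_eq_iff algebra_simps)

lemma sum_mat_nth: "(\<Sum>x\<in>S. f x :: 'a::comm_monoid_add^'n^'m) $ i $ j = (\<Sum>x\<in>S. f x $ i $ j)"
  by (induction S rule: infinite_finite_induct) auto

lemma hs_inner_mscale_right[simp]: "hs_inner A (mscale c B) = c * hs_inner A B"
  by (simp add: hs_inner_sum sum_distrib_left algebra_simps)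

lemma hs_inner_mscale_left[simp]: "hs_inner (mscale c A) B = cnj c * hs_inner A B"
  by (simp add: hs_inner_sum sum_distrib_left algebra_simps)

lemma hs_inner_add_right: "hs_inner A (B + C) = hs_inner A B + hs_inner A C"
  by (simp add: hs_inner_sum sum.distrib algebra_simps)

lemma hs_inner_sum_right: "hs_inner A (\<Sum>x\<in>S. f x) = (\<Sum>x\<in>S. hs_inner A (f x))"
proof -
  have "hs_inner A (\<Sum>x\<in>S. f x) = (\<Sum>i\<in>UNIV. \<Sum>j\<in>UNIV. \<Sum>x\<in>S. cnj (A$i$j) * f x$i$j)"
    by (simp add: hs_inner_sum sum_mat_nth sum_distrib_left)
  also have "\<dots> = (\<Sum>i\<in>UNIV. \<Sum>x\<in>S. \<Sum>j\<in>UNIV. cnj (A$i$j) * f x$i$j)"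
    by (rule sum.cong[OF refl], rule sum.swap)
  also have "\<dots> = (\<Sum>x\<in>S. \<Sum>i\<in>UNIV. \<Sum>j\<in>UNIV. cnj (A$i$j) * f x$i$j)"
    by (rule sum.swap)
  finally show ?thesis by (simp add: hs_inner_sum)
qed

lemma hs_inner_zero_right[simp]: "hs_inner A 0 = 0"
  by (simp add: hs_inner_sum)

lemma hs_inner_cnj: "hs_inner B A = cnj (hs_inner A B)"
  by (simp add: hs_inner_sum mult.commute)

lemma adj_adj[simp]: "adj (adj A) = A"
  by (simp add: adj_def Finite_Cartesian_Product.vec_eq_iff)

lemma adj_mult: "adj (A ** B) = adj B ** adj A"
  by (simp add: adj_def matrix_matrix_mult_def Finite_Cartesian_Product.vec_eq_iff mult.commute)

lemma conj_action_nth: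
  "conj_action R g X $ i $ j = (\<Sum>l\<in>UNIV. (\<Sum>k\<in>UNIV. R g $ i $ k * X $ k $ l) * cnj (R g $ j $ l))"
  by (simp add: conj_action_def matrix_matrix_mult_def adj_def)

lemma conj_action_mscale: "conj_action R g (mscale c X) = mscale c (conj_action R g X)"
  by (simp add: Finite_Cartesian_Product.vec_eq_iff conj_action_nth sum_distrib_left algebra_simps)

lemma conj_action_add: "conj_action R g (X + Y) = conj_action R g X + conj_action R g Y"
  by (simp add: Finite_Cartesian_Product.vec_eq_iff conj_action_nth sum.distrib algebra_simps)

lemma conj_action_zero[simp]: "conj_action R g 0 = 0"
  by (simp add: Finite_Cartesian_Product.vec_eq_iff conj_action_nth)

lemma conj_action_sum: "finite S \<Longrightarrow> conj_action R g (\<Sum>x\<in>S. f x) = (\<Sum>x\<in>S. conj_action R g (f x))"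
  by (induction S rule: finite_induct) (auto simp: conj_action_add)

lemma hs_inner_conj_action:
  assumes "unitary_mat (R g)"
  shows "hs_inner (conj_action R g X) (conj_action R g Y) = hs_inner X Y"
proof -
  have u: "adj (R g) ** R g = mat 1" using assms by (simp add: unitary_mat_def)
  have "hs_inner (conj_action R g X) (conj_action R g Y)
      = trace (R g ** adj X ** (adj (R g) ** R g) ** Y ** adj (R g))"
    unfolding hs_inner_def conj_action_def adj_mult adj_adj by (simp add: matrix_mul_assoc)
  also have "\<dots> = trace (R g ** (adj X ** Y ** adj (R g)))"
    by (simp add: u matrix_mul_assoc)
  also have "\<dots> = trace (adj X ** Y ** adj (R g) ** R g)"
    by (subst trace_mul_sym) (simp add: matrix_mul_assoc)
  also have "\<dots> = hs_inner X Y" by (simp add: hs_inner_def u matrix_mul_assoc[symmetric])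
  finally show ?thesis .
qed

lemma conj_action_mul:
  assumes "R (mul g h) = R g ** R h"
  shows "conj_action R (mul g h) X = conj_action R g (conj_action R h X)"
  unfolding conj_action_def assms adj_mult by (simp add: matrix_mul_assoc)

lemma trace_goal_eq:
  "trace (adj A ** R g ** B ** adj (R g)) = hs_inner A (conj_action R g B)"
  unfolding hs_inner_def conj_action_def by (simp add: matrix_mul_assoc)

lemma cnj_mult_self: "cnj z * z = complex_of_real ((cmod z)\<^sup>2)"
  by (metis complex_norm_square mult.commute)

lemma hs_inner_self_eq0: "hs_inner A A = 0 \<Longrightarrow> A = 0"
proof -
  assume h: "hs_inner A A = 0"
  have e: "hs_inner A A = of_real (\<Sum>i\<in>UNIV. \<Sum>j\<in>UNIV. (cmod (A$i$j))\<^sup>2)"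
    by (simp add: hs_inner_sum cnj_mult_self)
  have "complex_of_real (\<Sum>i\<in>UNIV. \<Sum>j\<in>UNIV. (cmod (A$i$j))\<^sup>2) = 0" using h e by metis
  hence "(\<Sum>i\<in>UNIV. \<Sum>j\<in>UNIV. (cmod (A$i$j))\<^sup>2) = 0" by (simp only: of_real_eq_0_iff)
  hence "\<forall>i. (\<Sum>j\<in>UNIV. (cmod (A$i$j))\<^sup>2) = 0"
    by (subst (asm) sum_nonneg_eq_0_iff) (auto intro: sum_nonneg)
  hence "\<forall>i j. (cmod (A$i$j))\<^sup>2 = 0"
    by (subst (asm) sum_nonneg_eq_0_iff) auto
  thus "A = 0" by (simp add: Finite_Cartesian_Product.vec_eq_iff)
qed

section \<open>Haar measure invariance\<close>

lemma haar_sets: "normalized_haar mul \<mu> \<Longrightarrow> sets \<mu> = sets borel"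
  unfolding normalized_haar_def by (elim conjE)

lemma haar_space: "normalized_haar mul \<mu> \<Longrightarrow> space \<mu> = UNIV"
proof -
  assume "normalized_haar mul \<mu>"
  hence "sets \<mu> = sets borel" by (rule haar_sets)
  hence "space \<mu> = space borel" by (rule sets_eq_imp_space_eq)
  thus ?thesis by simp
qed

lemma haar_one: "normalized_haar mul \<mu> \<Longrightarrow> emeasure \<mu> (space \<mu>) = 1"
  unfolding normalized_haar_def by (elim conjE)

lemma haar_finite: "normalized_haar mul \<mu> \<Longrightarrow> finite_measure \<mu>"
  by (rule finite_measureI) (simp add: haar_one)

lemma haar_measure_one: "normalized_haar mul \<mu> \<Longrightarrow> measure \<mu> (space \<mu>) = 1"
  by (simp add: measure_def haar_one)

lemma haar_meas_cong: "normalized_haar mul \<mu> \<Longrightarrow> f \<in> borel_measurable borel \<Longrightarrow> f \<in> borel_measurable \<mu>"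
  using measurable_cong_sets[OF haar_sets refl, of mul \<mu>] by blast

lemma mul_left_cont:
  assumes G: "compact_group mul z1 iv"
  shows "continuous_on UNIV (mul h)"
proof -
  have c: "continuous_on UNIV (\<lambda>p. mul (fst p) (snd p))" using G unfolding compact_group_def by auto
  have "continuous_on UNIV ((\<lambda>p. mul (fst p) (snd p)) \<circ> (\<lambda>g. (h, g)))"
    by (rule continuous_on_compose) (auto intro!: continuous_intros intro: continuous_on_subset[OF c])
  thus ?thesis by (simp add: o_def)
qed

lemma haar_integral_invariant:
  fixes f :: "'g::t2_space \<Rightarrow> 'b::{banach, second_countable_topology}"
  assumes G: "compact_group mul z1 iv" and haar: "normalized_haar mul \<mu>"
    and f: "f \<in> borel_measurable borel"
  shows "(\<integral>g. f (mul h g) \<partial>\<mu>) = (\<integral>g. f g \<partial>\<mu>)"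
proof -
  interpret grp: Groups.group mul z1 iv using G unfolding compact_group_def by auto
  have sets: "sets \<mu> = sets borel" using haar unfolding normalized_haar_def by auto
  have sp: "space \<mu> = UNIV" using haar_space[OF haar] .
  have mb: "mul h \<in> borel_measurable borel"
    by (rule borel_measurable_continuous_onI[OF mul_left_cont[OF G]])
  have m: "mul h \<in> measurable \<mu> \<mu>"
    using mb by (simp add: measurable_cong_sets[OF sets sets])
  have d: "distr \<mu> \<mu> (mul h) = \<mu>"
  proof (rule measure_eqI)
    show "sets (distr \<mu> \<mu> (mul h)) = sets \<mu>" by simp
    fix A assume A: "A \<in> sets (distr \<mu> \<mu> (mul h))"
    hence A': "A \<in> sets borel" using sets by simp
    have pre: "mul h -` A \<inter> space \<mu> = mul (iv h) ` A"
    proof -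
      have inv1: "mul (iv h) (mul h x) = x" for x
        by (metis grp.assoc grp.left_inverse grp.group_left_neutral)
      have inv2: "mul h (mul (iv h) x) = x" for x
        by (metis grp.assoc grp.right_inverse grp.group_left_neutral)
      show ?thesis unfolding sp
      proof (intro equalityI subsetI)
        fix x assume "x \<in> mul h -` A \<inter> UNIV"
        hence "mul h x \<in> A" by simp
        thus "x \<in> mul (iv h) ` A" using inv1[of x] by (metis image_eqI)
      next
        fix x assume "x \<in> mul (iv h) ` A"
        then obtain a where "a \<in> A" "x = mul (iv h) a" by blast
        thus "x \<in> mul h -` A \<inter> UNIV" using inv2[of a] by simp
      qed
    qed
    have "emeasure (distr \<mu> \<mu> (mul h)) A = emeasure \<mu> (mul h -` A \<inter> space \<mu>)"
      using A m by (simp add: emeasure_distr)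
    also have "\<dots> = emeasure \<mu> A" unfolding pre using haar A' unfolding normalized_haar_def by auto
    finally show "emeasure (distr \<mu> \<mu> (mul h)) A = emeasure \<mu> A" .
  qed
  have fm: "f \<in> borel_measurable \<mu>" using haar_meas_cong[OF haar f] .
  have "(\<integral>g. f g \<partial>\<mu>) = (\<integral>g. f g \<partial>(distr \<mu> \<mu> (mul h)))" by (simp add: d)
  also have "\<dots> = (\<integral>g. f (mul h g) \<partial>\<mu>)" by (rule integral_distr[OF m fm])
  finally show ?thesis by simp
qed

section \<open>cinner and orthonormal bases\<close>

lemma sum_delta1[simp]: "(\<Sum>j\<in>(UNIV::'a::finite set). f j * (if i = j then 1 else (0::'b::comm_semiring_1))) = f i"
proof -
  have "(\<Sum>j\<in>UNIV. f j * (if i = j then 1 else (0::'b))) = (\<Sum>j\<in>UNIV. if i = j then f j else 0)"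
    by (rule sum.cong) auto
  thus ?thesis by simp
qed

lemma sum_delta2[simp]: "(\<Sum>j\<in>(UNIV::'a::finite set). f j * (if j = i then 1 else (0::'b::comm_semiring_1))) = f i"
proof -
  have "(\<Sum>j\<in>UNIV. f j * (if j = i then 1 else (0::'b))) = (\<Sum>j\<in>UNIV. if j = i then f j else 0)"
    by (rule sum.cong) auto
  thus ?thesis by simp
qed

lemma cinner_scale_right[simp]: "cinner u (a *s v) = a * cinner u v"
  by (simp add: cinner_def sum_distrib_left algebra_simps)

lemma cinner_scale_left[simp]: "cinner (a *s u) v = cnj a * cinner u v"
  by (simp add: cinner_def sum_distrib_left algebra_simps)

lemma cinner_add_right: "cinner u (v1 + v2) = cinner u v1 + cinner u v2"
  by (simp add: cinner_def sum.distrib algebra_simps)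

lemma cinner_zero_right[simp]: "cinner u 0 = 0"
  by (simp add: cinner_def)

lemma cinner_sum_right: "cinner u (\<Sum>x\<in>S. f x) = (\<Sum>x\<in>S. cinner u (f x))"
proof (induction S rule: infinite_finite_induct)
  case (insert x F) thus ?case by (simp add: cinner_add_right)
qed auto

lemma cinner_cnj: "cinner v u = cnj (cinner u v)"
  by (simp add: cinner_def mult.commute)

lemma cinner_adj: "cinner (A *v u) v = cinner u (adj A *v v)"
proof -
  have "cinner (A *v u) v = (\<Sum>i\<in>UNIV. \<Sum>j\<in>UNIV. cnj (A$i$j) * cnj (u$j) * v$i)"
    by (simp add: cinner_def matrix_vector_mult_def sum_distrib_right)
  also have "\<dots> = (\<Sum>j\<in>UNIV. \<Sum>i\<in>UNIV. cnj (A$i$j) * cnj (u$j) * v$i)"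
    by (rule sum.swap)
  also have "\<dots> = cinner u (adj A *v v)"
    by (simp add: cinner_def matrix_vector_mult_def adj_def sum_distrib_left algebra_simps)
  finally show ?thesis .
qed

lemma mv_scale: "A *v (c *s v) = c *s (A *v (v::complex^'n))"
  by (simp add: matrix_vector_mult_def Finite_Cartesian_Product.vec_eq_iff sum_distrib_left algebra_simps)

lemma mv_sum: "A *v (\<Sum>x\<in>S. f x) = (\<Sum>x\<in>S. A *v (f x :: complex^'n))"
proof (induction S rule: infinite_finite_induct)
  case (insert x F) thus ?case by (simp add: matrix_vector_right_distrib)
qed auto

definition ONB :: "('n \<Rightarrow> complex^'n) \<Rightarrow> bool" where
  "ONB w \<longleftrightarrow> (\<forall>j j'. cinner (w j) (w j') = (if j = j' then 1 else 0))"

lemma ONB_inj: "ONB w \<Longrightarrow> inj w"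
  unfolding ONB_def inj_def by (metis zero_neq_one)

lemma ONB_expand:
  fixes w :: "'n::finite \<Rightarrow> complex^'n"
  assumes on: "ONB w"
  shows "x = (\<Sum>j\<in>UNIV. cinner (w j) x *s w j)"
proof -
  have inj: "inj w" using ONB_inj[OF on] .
  have ind: "vec.independent (range w)"
  proof
    assume "vec.dependent (range w)"
    then obtain u where u: "\<exists>v\<in>range w. u v \<noteq> 0" "(\<Sum>v\<in>range w. u v *s v) = 0"
      using vec.dependent_finite[of "range w"] by auto
    have s: "(\<Sum>j\<in>UNIV. u (w j) *s w j) = 0"
      using u(2) sum.reindex[OF inj, of "\<lambda>v. u v *s v"] by simp
    have "u (w i) = 0" for i
    proof -
      have "cinner (w i) (\<Sum>j\<in>UNIV. u (w j) *s w j) = u (w i)"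
        using on by (simp add: cinner_sum_right ONB_def)
      thus ?thesis using s by simp
    qed
    with u(1) show False by auto
  qed
  have "card (range w) = CARD('n)" using inj by (simp add: card_image)
  hence "vec.dim (vec.span (range w)) = vec.dim (UNIV :: (complex^'n) set)"
    using vec.dim_eq_card_independent[OF ind] by (simp add: card_cart_basis)
  hence sp: "vec.span (range w) = UNIV"
    by (intro vec.subspace_dim_equal) auto
  have "x \<in> vec.span (range w)" using sp by simp
  then obtain u where "x = (\<Sum>v\<in>range w. u v *s v)"
    using vec.span_finite[of "range w"] by auto
  hence x: "x = (\<Sum>j\<in>UNIV. u (w j) *s w j)"
    using sum.reindex[OF inj, of "\<lambda>v. u v *s v"] by simp
  have "cinner (w i) x = u (w i)" for i
    unfolding x using on by (simp add: cinner_sum_right ONB_def)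
  thus ?thesis using x by simp
qed

lemma ONB_rows:
  fixes w :: "'n::finite \<Rightarrow> complex^'n"
  assumes on: "ONB w"
  shows "(\<Sum>j\<in>UNIV. cnj (w j $ b) * w j $ a) = (if a = b then 1 else 0)"
proof -
  have "axis b 1 = (\<Sum>j\<in>UNIV. cinner (w j) (axis b 1) *s w j)" by (rule ONB_expand[OF on])
  hence "axis b (1::complex) $ a = (\<Sum>j\<in>UNIV. cinner (w j) (axis b 1) *s w j) $ a" by simp
  moreover have "cinner (w j) (axis b 1) = cnj (w j $ b)" for j
    by (simp add: cinner_def axis_def)
  ultimately show ?thesis by (simp add: sum_component axis_def)
qed

lemma ONB_mat_eq:
  fixes w :: "'n::finite \<Rightarrow> complex^'n"
  assumes on: "ONB w"
    and h: "\<And>i j. cinner (w i) (A *v w j) = cinner (w i) (B *v w j)"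
  shows "A = B"
proof -
  have c: "A *v w j = B *v w j" for j
    using ONB_expand[OF on, of "A *v w j"] ONB_expand[OF on, of "B *v w j"] h by simp
  have "A *v x = B *v x" for x
  proof -
    have "A *v x = (\<Sum>j\<in>UNIV. cinner (w j) x *s (A *v w j))"
      by (subst ONB_expand[OF on, of x]) (simp add: mv_sum mv_scale)
    also have "\<dots> = (\<Sum>j\<in>UNIV. cinner (w j) x *s (B *v w j))" by (simp add: c)
    also have "\<dots> = B *v x"
      by (subst (2) ONB_expand[OF on, of x]) (simp add: mv_sum mv_scale)
    finally show ?thesis .
  qed
  thus ?thesis by (simp add: matrix_eq)
qed

lemma ONB_trace:
  fixes w :: "'n::finite \<Rightarrow> complex^'n"
  assumes on: "ONB w"
  shows "trace C = (\<Sum>j\<in>UNIV. cinner (w j) (C *v w j))"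
proof -
  have "(\<Sum>j\<in>UNIV. cinner (w j) (C *v w j))
      = (\<Sum>j\<in>UNIV. \<Sum>a\<in>UNIV. \<Sum>b\<in>UNIV. C$a$b * (cnj (w j $ a) * w j $ b))"
    by (simp add: cinner_def matrix_vector_mult_def sum_distrib_left algebra_simps)
  also have "\<dots> = (\<Sum>a\<in>UNIV. \<Sum>j\<in>UNIV. \<Sum>b\<in>UNIV. C$a$b * (cnj (w j $ a) * w j $ b))"
    by (rule sum.swap)
  also have "\<dots> = (\<Sum>a\<in>UNIV. \<Sum>b\<in>UNIV. \<Sum>j\<in>UNIV. C$a$b * (cnj (w j $ a) * w j $ b))"
    by (rule sum.cong[OF refl], rule sum.swap)
  also have "\<dots> = (\<Sum>a\<in>UNIV. \<Sum>b\<in>UNIV. C$a$b * (if b = a then 1 else 0))"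
    by (simp add: sum_distrib_left[symmetric] ONB_rows[OF on])
  also have "\<dots> = trace C" by (simp add: Determinants.trace_def)
  finally show ?thesis by simp
qed

section \<open>Eigenvalues of R on the basis\<close>

definition chi :: "('g \<Rightarrow> complex^'n^'n) \<Rightarrow> ('n \<Rightarrow> complex^'n) \<Rightarrow> 'g \<Rightarrow> 'n \<Rightarrow> complex" where
  "chi R w h j = cinner (w j) (R h *v w j)"

lemma chi_eig:
  assumes on: "ONB w" and ev: "\<exists>c. R h *v w j = c *s w j"
  shows "R h *v w j = chi R w h j *s w j"
proof -
  obtain c where c: "R h *v w j = c *s w j" using ev by blast
  have "chi R w h j = c" unfolding chi_def c using on by (simp add: ONB_def)
  thus ?thesis using c by simp
qed

lemma chi_norm:
  assumes on: "ONB w" and ev: "\<exists>c. R h *v w j = c *s w j" and U: "unitary_mat (R h)"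
  shows "cnj (chi R w h j) * chi R w h j = 1"
proof -
  have u: "adj (R h) ** R h = mat 1" using U by (simp add: unitary_mat_def)
  have "cinner (R h *v w j) (R h *v w j) = cinner (w j) (w j)"
    by (simp add: cinner_adj matrix_vector_mul_assoc u)
  also have "\<dots> = 1" using on by (simp add: ONB_def)
  finally have "cinner (R h *v w j) (R h *v w j) = 1" .
  hence "chi R w h j * cnj (chi R w h j) = 1"
    unfolding chi_eig[of w R h j, OF on ev] using on by (simp add: ONB_def)
  thus ?thesis by (simp add: mult.commute)
qed

lemma chi_adj:
  assumes on: "ONB w" and ev: "\<exists>c. R h *v w j = c *s w j" and U: "unitary_mat (R h)"
  shows "adj (R h) *v w j = cnj (chi R w h j) *s w j"
proof -
  let ?c = "chi R w h j"
  have u: "adj (R h) ** R h = mat 1" using U by (simp add: unitary_mat_def)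
  have "w j = adj (R h) *v (R h *v w j)" by (simp add: matrix_vector_mul_assoc u)
  also have "\<dots> = ?c *s (adj (R h) *v w j)" by (simp add: chi_eig[of w R h j, OF on ev] mv_scale)
  finally have "cnj ?c *s w j = (cnj ?c * ?c) *s (adj (R h) *v w j)" by (metis vector_smult_assoc)
  thus ?thesis using chi_norm[of w R h j, OF on ev U] by simp
qed

lemma conj_action_entry:
  assumes on: "ONB w" and evi: "\<exists>c. R h *v w i = c *s w i" and evj: "\<exists>c. R h *v w j = c *s w j"
    and U: "unitary_mat (R h)"
  shows "cinner (w i) (conj_action R h X *v w j)
       = chi R w h i * cnj (chi R w h j) * cinner (w i) (X *v w j)"
proof -
  have "conj_action R h X *v w j = R h *v (X *v (adj (R h) *v w j))"
    by (simp add: conj_action_def matrix_vector_mul_assoc matrix_mul_assoc)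
  also have "\<dots> = cnj (chi R w h j) *s (R h *v (X *v w j))"
    by (simp add: chi_adj[of w R h j, OF on evj U] mv_scale)
  finally have e: "conj_action R h X *v w j = cnj (chi R w h j) *s (R h *v (X *v w j))" .
  have "cinner (w i) (R h *v y) = chi R w h i * cinner (w i) y" for y
  proof -
    have "cinner (w i) (R h *v y) = cinner (w i) (adj (adj (R h)) *v y)" by simp
    also have "\<dots> = cinner (adj (R h) *v w i) y" by (rule cinner_adj[symmetric])
    also have "\<dots> = chi R w h i * cinner (w i) y" by (simp add: chi_adj[of w R h i, OF on evi U])
    finally show ?thesis .
  qed
  thus ?thesis unfolding e by simp
qed

section \<open>Block structure\<close>

lemma block_orth:
  assumes on: "ONB w" and i: "blk i \<noteq> k" and y: "y \<in> block_space w blk k"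
  shows "cinner (w i) y = 0"
proof -
  have "vec.span (w ` {j. blk j = k}) \<subseteq> {y. cinner (w i) y = 0}"
  proof (rule vec.span_minimal)
    show "w ` {j. blk j = k} \<subseteq> {y. cinner (w i) y = 0}"
      using on i by (auto simp: ONB_def)
    show "vec.subspace {y. cinner (w i) y = 0}"
      by (auto simp: vec.subspace_def cinner_add_right)
  qed
  thus ?thesis using y unfolding block_space_def by auto
qed

lemma End_block_offdiag:
  assumes on: "ONB w" and X: "X \<in> End_block w blk k" and d: "diagonal_in w blk k X" and ij: "i \<noteq> j"
  shows "cinner (w i) (X *v w j) = 0"
proof (cases "blk j = k")
  case False
  thus ?thesis using X unfolding End_block_def by auto
next
  case True
  have wj: "w j \<in> block_space w blk k" unfolding block_space_def using True
    by (auto intro: vec.span_base)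
  hence Xwj: "X *v w j \<in> block_space w blk k" using X unfolding End_block_def by auto
  show ?thesis
  proof (cases "blk i = k")
    case True
    thus ?thesis using d ij \<open>blk j = k\<close> unfolding diagonal_in_def by auto
  next
    case False
    thus ?thesis using block_orth[OF on False Xwj] by simp
  qed
qed

lemma End_block_diag_vec:
  assumes on: "ONB w" and X: "X \<in> End_block w blk k" and d: "diagonal_in w blk k X"
  shows "X *v w j = cinner (w j) (X *v w j) *s w j"
proof -
  have "X *v w j = (\<Sum>i\<in>UNIV. cinner (w i) (X *v w j) *s w i)" by (rule ONB_expand[OF on])
  also have "\<dots> = (\<Sum>i\<in>UNIV. if i = j then cinner (w j) (X *v w j) *s w j else 0)"
    by (rule sum.cong) (auto simp: End_block_offdiag[OF on X d])
  also have "\<dots> = cinner (w j) (X *v w j) *s w j" by simp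
  finally show ?thesis .
qed

lemma diag_fixed:
  assumes on: "ONB w" and X: "X \<in> End_block w blk k" and d: "diagonal_in w blk k X"
    and ev: "\<And>j. \<exists>c. R h *v w j = c *s w j" and U: "unitary_mat (R h)"
  shows "conj_action R h X = X"
proof (rule ONB_mat_eq[OF on])
  fix i j
  show "cinner (w i) (conj_action R h X *v w j) = cinner (w i) (X *v w j)"
  proof (cases "i = j")
    case True
    have "cnj (chi R w h j) * chi R w h j = 1" by (rule chi_norm[of w R h j, OF on ev U])
    hence "chi R w h j * cnj (chi R w h j) = 1" by (simp add: mult.commute)
    thus ?thesis using True conj_action_entry[of w R h j j X, OF on ev ev U] by simp
  next
    case False
    thus ?thesis by (simp add: conj_action_entry[of w R h i j, OF on ev ev U] End_block_offdiag[OF on X d])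
  qed
qed

lemma hs_orth_diag:
  assumes on: "ONB w" and A: "A \<in> End_block w blk k" and B: "B \<in> End_block w blk k"
    and zA: "zero_diagonal_in w blk k A" and dB: "diagonal_in w blk k B"
  shows "hs_inner A B = 0"
proof -
  have "hs_inner A B = (\<Sum>j\<in>UNIV. cinner (w j) ((adj A ** B) *v w j))"
    unfolding hs_inner_def by (rule ONB_trace[OF on])
  also have "\<dots> = (\<Sum>j\<in>UNIV. cinner (A *v w j) (B *v w j))"
    by (simp add: cinner_adj matrix_vector_mul_assoc)
  also have "\<dots> = 0"
  proof (rule sum.neutral, rule ballI)
    fix j
    show "cinner (A *v w j) (B *v w j) = 0"
    proof (cases "blk j = k")
      case False
      thus ?thesis using B unfolding End_block_def by auto
    next
      case True
      have "cinner (A *v w j) (B *v w j) = cinner (w j) (B *v w j) * cinner (A *v w j) (w j)"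
        by (subst End_block_diag_vec[OF on B dB]) simp
      also have "cinner (A *v w j) (w j) = cnj (cinner (w j) (A *v w j))" by (rule cinner_cnj)
      also have "cinner (w j) (A *v w j) = 0" using zA True unfolding zero_diagonal_in_def by auto
      finally show ?thesis by simp
    qed
  qed
  finally show ?thesis .
qed

section \<open>Multiplicity-freeness forces diagonality\<close>

lemma span_line: "vec.span {v} = range (\<lambda>c. c *s (v::complex^'n))"
  by (rule vec.span_singleton)

lemma ONB_nz: "ONB w \<Longrightarrow> w i \<noteq> 0"
  unfolding ONB_def by (metis cinner_zero_right zero_neq_one)

lemma irr_line:
  assumes on: "ONB w" and ev: "\<And>h. h \<in> Hs \<Longrightarrow> \<exists>c. R h *v w i = c *s w i"
  shows "irreducible_submodule (*s) (\<lambda>g v. R g *v v) Hs (vec.span {w i})"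
  unfolding irreducible_submodule_def
proof (intro conjI allI impI)
  show "invariant_subspace (*s) (\<lambda>g v. R g *v v) Hs (vec.span {w i})"
    unfolding invariant_subspace_def
  proof (intro conjI ballI)
    show "vec.subspace (vec.span {w i})" by (rule vec.subspace_span)
    fix h x assume h: "h \<in> Hs" and x: "x \<in> vec.span {w i}"
    then obtain c where "x = c *s w i" unfolding span_line by auto
    hence "R h *v x = (c * chi R w h i) *s w i"
      using chi_eig[of w R h i, OF on ev[OF h]] by (simp add: mv_scale)
    thus "R h *v x \<in> vec.span {w i}" unfolding span_line by auto
  qed
  show "vec.span {w i} \<noteq> {0}" using ONB_nz[OF on, of i] vec.span_base[of "w i" "{w i}"] by auto
  fix U assume U: "invariant_subspace (*s) (\<lambda>g v. R g *v v) Hs U \<and> U \<subseteq> vec.span {w i}"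
  hence sU: "vec.subspace U" unfolding invariant_subspace_def by auto
  show "U = {0} \<or> U = vec.span {w i}"
  proof (cases "U = {0}")
    case False
    then obtain u where u: "u \<in> U" "u \<noteq> 0" using vec.subspace_0[OF sU] by auto
    then obtain c where c: "u = c *s w i" using U unfolding span_line by auto
    with u have c0: "c \<noteq> 0" by auto
    have "w i = inverse c *s u" using c c0 by simp
    hence "w i \<in> U" using vec.subspace_scale[OF sU u(1)] by metis
    hence "vec.span {w i} \<subseteq> U" using vec.span_minimal[OF _ sU] by auto
    thus ?thesis using U by auto
  qed simp
qed

lemma iso_lines:
  assumes on: "ONB w" and evi: "\<And>h. h \<in> Hs \<Longrightarrow> \<exists>c. R h *v w i = c *s w i"
    and evj: "\<And>h. h \<in> Hs \<Longrightarrow> \<exists>c. R h *v w j = c *s w j"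
    and eq: "\<And>h. h \<in> Hs \<Longrightarrow> chi R w h i = chi R w h j"
  shows "isomorphic_modules (*s) (\<lambda>g v. R g *v v) (vec.span {w i}) (*s) (\<lambda>g v. R g *v v) (vec.span {w j}) Hs"
proof -
  define M where "M = (\<chi> a b. w j $ a * cnj (w i $ b))"
  have Mx: "M *v x = cinner (w i) x *s w j" for x
    by (simp add: M_def matrix_vector_mult_def cinner_def Finite_Cartesian_Product.vec_eq_iff
        sum_distrib_left algebra_simps)
  have Mwi: "M *v (c *s w i) = c *s w j" for c using on by (simp add: Mx ONB_def)
  have Mwi1: "M *v w i = w j" using on by (simp add: Mx ONB_def)
  have nzj: "w j \<noteq> 0" by (rule ONB_nz[OF on])
  have bij: "bij_betw ((*v) M) (vec.span {w i}) (vec.span {w j})"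
    unfolding bij_betw_def
  proof
    show "inj_on ((*v) M) (vec.span {w i})"
    proof (rule inj_onI)
      fix x y assume "x \<in> vec.span {w i}" "y \<in> vec.span {w i}" and e: "M *v x = M *v y"
      then obtain c d where cd: "x = c *s w i" "y = d *s w i" unfolding span_line by auto
      with e have "c *s w j = d *s w j" by (simp add: Mwi)
      hence "c = d" using nzj by (metis vector_mul_rcancel)
      thus "x = y" using cd by simp
    qed
    show "(*v) M ` vec.span {w i} = vec.span {w j}"
      unfolding span_line by (auto simp: Mwi image_iff)
  qed
  have inter: "\<forall>g\<in>Hs. \<forall>x\<in>vec.span {w i}. M *v (R g *v x) = R g *v (M *v x)"
  proof (intro ballI)
    fix h x assume h: "h \<in> Hs" and x: "x \<in> vec.span {w i}"
    then obtain c where c: "x = c *s w i" unfolding span_line by auto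
    have "M *v (R h *v x) = (c * chi R w h i) *s w j"
      using chi_eig[of w R h i, OF on evi[OF h]] c by (simp add: mv_scale Mwi Mwi1)
    moreover have "R h *v (M *v x) = (c * chi R w h j) *s w j"
      using chi_eig[of w R h j, OF on evj[OF h]] c by (simp add: mv_scale Mwi Mwi1)
    ultimately show "M *v (R h *v x) = R h *v (M *v x)" using eq[OF h] by simp
  qed
  show ?thesis unfolding isomorphic_modules_def
    using matrix_vector_mul_linear_gen[of M] bij inter by blast
qed

lemma fixed_diag:
  assumes on: "ONB w"
    and ev: "\<And>j h. h \<in> Hs \<Longrightarrow> \<exists>c. R h *v w j = c *s w j"
    and U: "\<And>h. unitary_mat (R h)"
    and mf: "multiplicity_free (*s) (\<lambda>g v. R g *v v) Hs (block_space w blk k)"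
    and X: "X \<in> End_block w blk k"
    and fx: "\<And>h. h \<in> Hs \<Longrightarrow> conj_action R h X = X"
  shows "diagonal_in w blk k X"
  unfolding diagonal_in_def
proof (intro allI impI)
  fix i j assume ij: "blk i = k \<and> blk j = k \<and> i \<noteq> j"
  show "cinner (w i) (X *v w j) = 0"
  proof (rule ccontr)
    assume x0: "cinner (w i) (X *v w j) \<noteq> 0"
    have eq: "chi R w h i = chi R w h j" if h: "h \<in> Hs" for h
    proof -
      have "chi R w h i * cnj (chi R w h j) * cinner (w i) (X *v w j) = cinner (w i) (X *v w j)"
        using conj_action_entry[of w R h i j X, OF on ev[OF h] ev[OF h] U] fx[OF h] by simp
      hence p: "chi R w h i * cnj (chi R w h j) = 1" using x0 by simp
      have "chi R w h i = chi R w h i * (cnj (chi R w h j) * chi R w h j)"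
        using chi_norm[of w R h j, OF on ev[OF h] U] by simp
      also have "\<dots> = chi R w h j" using p by (simp add: mult.assoc[symmetric])
      finally show ?thesis .
    qed
    have sub: "vec.span {w l} \<subseteq> block_space w blk k" if "blk l = k" for l
      unfolding block_space_def using that by (intro vec.span_mono) auto
    have "vec.span {w i} = vec.span {w j}"
      using mf unfolding multiplicity_free_def
      using irr_line[of w Hs R i, OF on ev] irr_line[of w Hs R j, OF on ev]
        sub[of i] sub[of j] ij iso_lines[of w Hs R i j, OF on ev ev eq] by blast
    hence "w j \<in> vec.span {w i}" using vec.span_base[of "w j" "{w j}"] by auto
    then obtain c where "w j = c *s w i" unfolding span_line by auto
    hence "cinner (w j) (w j) = c * cinner (w j) (w i)" by (metis cinner_scale_right)
    thus False using on ij unfolding ONB_def by auto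
  qed
qed

section \<open>Orthonormal basis of E\<close>

definition HONB :: "('s::finite \<Rightarrow> complex^'n^'n) \<Rightarrow> (complex^'n^'n) set \<Rightarrow> bool" where
  "HONB e E \<longleftrightarrow> (\<forall>\<sigma> \<tau>. hs_inner (e \<sigma>) (e \<tau>) = (if \<sigma> = \<tau> then 1 else 0)) \<and>
     Modules.module.span mscale (range e) = E"

lemma HONB_inj: "HONB e E \<Longrightarrow> inj e"
  unfolding HONB_def inj_def by (metis zero_neq_one)

lemma HONB_coord_comb:
  "HONB e E \<Longrightarrow> hs_inner (e \<alpha>) (\<Sum>\<sigma>\<in>UNIV. mscale (c \<sigma>) (e \<sigma>)) = c \<alpha>"
  unfolding HONB_def by (simp add: hs_inner_sum_right)

lemma HONB_comb_in:
  assumes "HONB e E"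
  shows "(\<Sum>\<sigma>\<in>S. mscale (c \<sigma>) (e \<sigma>)) \<in> E"
proof -
  interpret M: Modules.module mscale by (rule module_mscale)
  have "(\<Sum>\<sigma>\<in>S. mscale (c \<sigma>) (e \<sigma>)) \<in> M.span (range e)"
    by (intro M.span_sum M.span_scale M.span_base) auto
  thus ?thesis using assms unfolding HONB_def by simp
qed

lemma HONB_in: "HONB e E \<Longrightarrow> e \<sigma> \<in> E"
  unfolding HONB_def using Modules.module.span_base[OF module_mscale] by blast

lemma HONB_expand:
  assumes h: "HONB e E" and X: "X \<in> E"
  shows "X = (\<Sum>\<sigma>\<in>UNIV. mscale (hs_inner (e \<sigma>) X) (e \<sigma>))"
proof -
  interpret M: Modules.module mscale by (rule module_mscale)
  have inj: "inj e" by (rule HONB_inj[OF h])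
  have "X \<in> M.span (range e)" using h X unfolding HONB_def by simp
  then obtain u where "X = (\<Sum>v\<in>range e. mscale (u v) v)"
    using M.span_finite[of "range e"] by auto
  hence x: "X = (\<Sum>\<sigma>\<in>UNIV. mscale (u (e \<sigma>)) (e \<sigma>))"
    using sum.reindex[OF inj, of "\<lambda>v. mscale (u v) v"] by simp
  have "hs_inner (e \<alpha>) X = u (e \<alpha>)" for \<alpha>
    unfolding x by (rule HONB_coord_comb[OF h])
  thus ?thesis using x by simp
qed

lemma HONB_parseval:
  assumes h: "HONB e E" and X: "X \<in> E" and Y: "Y \<in> E"
  shows "hs_inner X Y = (\<Sum>\<alpha>\<in>UNIV. cnj (hs_inner (e \<alpha>) X) * hs_inner (e \<alpha>) Y)"
proof -
  have "hs_inner X Y = hs_inner X (\<Sum>\<alpha>\<in>UNIV. mscale (hs_inner (e \<alpha>) Y) (e \<alpha>))"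
    using HONB_expand[OF h Y] by simp
  also have "\<dots> = (\<Sum>\<alpha>\<in>UNIV. hs_inner (e \<alpha>) Y * hs_inner X (e \<alpha>))"
    by (simp add: hs_inner_sum_right)
  also have "\<dots> = (\<Sum>\<alpha>\<in>UNIV. cnj (hs_inner (e \<alpha>) X) * hs_inner (e \<alpha>) Y)"
    by (rule sum.cong) (auto simp: hs_inner_cnj[of X] mult.commute)
  finally show ?thesis .
qed

section \<open>Dimension counting\<close>

lemma dims:
  fixes T :: "complex^'d \<Rightarrow> complex^'n^'n" and e :: "'s::finite \<Rightarrow> complex^'n^'n"
    and \<rho> :: "'g \<Rightarrow> complex^'d^'d" and w :: "'n \<Rightarrow> complex^'n"
  assumes h: "HONB e E" and TL: "Vector_Spaces.linear (*s) mscale T"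
    and Tb: "bij_betw T UNIV E"
    and Ti: "\<forall>g\<in>UNIV. \<forall>x\<in>UNIV. T (\<rho> g *v x) = conj_action R g (T x)"
    and on: "ONB w" and ev: "\<And>j h. h \<in> Hs \<Longrightarrow> \<exists>c. R h *v w j = c *s w j"
    and U: "\<And>h. unitary_mat (R h)"
    and mf: "multiplicity_free (*s) (\<lambda>g v. R g *v v) Hs (block_space w blk k)"
    and Esub: "E \<subseteq> End_block w blk k"
    and ediag: "\<And>\<sigma>. diagonal_in w blk k (e \<sigma>) \<or> zero_diagonal_in w blk k (e \<sigma>)"
  shows "CARD('s) = CARD('d)" and "card {\<sigma>. diagonal_in w blk k (e \<sigma>)} = fixed_dim \<rho> Hs"
proof -
  interpret TL: Vector_Spaces.linear "(*s)" mscale T by (rule TL)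
  define f where "f \<sigma> = inv_into UNIV T (e \<sigma>)" for \<sigma>
  have Tf: "T (f \<sigma>) = e \<sigma>" for \<sigma>
    unfolding f_def using Tb HONB_in[OF h] by (simp add: bij_betw_inv_into_right)
  have Tinj: "T x = T y \<Longrightarrow> x = y" for x y using Tb unfolding bij_betw_def inj_on_def by auto
  have TE: "T x \<in> E" for x using Tb unfolding bij_betw_def by auto
  have Tcomb: "T (\<Sum>\<sigma>\<in>S. c \<sigma> *s f \<sigma>) = (\<Sum>\<sigma>\<in>S. mscale (c \<sigma>) (e \<sigma>))" for S c
    by (simp add: TL.sum TL.scale Tf)
  have repr: "x = (\<Sum>\<sigma>\<in>UNIV. hs_inner (e \<sigma>) (T x) *s f \<sigma>)" for x
  proof (rule Tinj)
    have "T x = (\<Sum>\<sigma>\<in>UNIV. mscale (hs_inner (e \<sigma>) (T x)) (e \<sigma>))"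
      by (rule HONB_expand[OF h TE])
    thus "T x = T (\<Sum>\<sigma>\<in>UNIV. hs_inner (e \<sigma>) (T x) *s f \<sigma>)" by (simp only: Tcomb)
  qed
  have injf: "inj f"
    using HONB_inj[OF h] Tf unfolding inj_def by metis
  have ind: "vec.independent (range f)"
  proof
    assume "vec.dependent (range f)"
    then obtain u where u: "\<exists>v\<in>range f. u v \<noteq> 0" "(\<Sum>v\<in>range f. u v *s v) = 0"
      using vec.dependent_finite[of "range f"] by auto
    have s: "(\<Sum>\<sigma>\<in>UNIV. u (f \<sigma>) *s f \<sigma>) = 0"
      using u(2) sum.reindex[OF injf, of "\<lambda>v. u v *s v"] by simp
    have "u (f \<alpha>) = 0" for \<alpha>
    proof -
      have "(\<Sum>\<sigma>\<in>UNIV. mscale (u (f \<sigma>)) (e \<sigma>)) = 0"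
        using arg_cong[OF s, of T] by (simp add: Tcomb)
      hence "hs_inner (e \<alpha>) (\<Sum>\<sigma>\<in>UNIV. mscale (u (f \<sigma>)) (e \<sigma>)) = 0" by simp
      thus ?thesis by (simp add: HONB_coord_comb[OF h])
    qed
    with u(1) show False by auto
  qed
  have spanf: "vec.span (range f) = UNIV"
  proof -
    have "x \<in> vec.span (range f)" for x
      by (subst repr[of x]) (intro vec.span_sum vec.span_scale vec.span_base, auto)
    thus ?thesis by auto
  qed
  have "CARD('d) = vec.dim (UNIV :: (complex^'d) set)" by (simp add: card_cart_basis)
  also have "\<dots> = vec.dim (range f)" using spanf vec.dim_span[of "range f"] by simp
  also have "\<dots> = card (range f)" by (rule vec.dim_eq_card_independent[OF ind])
  also have "\<dots> = CARD('s)" using injf by (simp add: card_image)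
  finally show "CARD('s) = CARD('d)" by simp
  define D where "D = {\<sigma>. diagonal_in w blk k (e \<sigma>)}"
  define F where "F = {v :: complex^'d. \<forall>h\<in>Hs. \<rho> h *v v = v}"
  have subF: "vec.subspace F"
    unfolding F_def vec.subspace_def by (auto simp: matrix_vector_right_distrib mv_scale)
  have "F = vec.span (f ` D)"
  proof
    show "F \<subseteq> vec.span (f ` D)"
    proof
      fix v assume v: "v \<in> F"
      let ?X = "T v"
      have XE: "?X \<in> End_block w blk k" using Esub TE by auto
      have fx: "conj_action R h ?X = ?X" if "h \<in> Hs" for h
      proof -
        have "\<rho> h *v v = v" using v that unfolding F_def by blast
        hence "T (\<rho> h *v v) = T v" by simp
        thus ?thesis using Ti by simp
      qed
      have dX: "diagonal_in w blk k ?X"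
        by (rule fixed_diag[OF on ev U mf XE fx])
      have z: "hs_inner (e \<sigma>) ?X = 0" if "\<sigma> \<notin> D" for \<sigma>
      proof -
        have "zero_diagonal_in w blk k (e \<sigma>)" using ediag[of \<sigma>] that unfolding D_def by auto
        thus ?thesis using hs_orth_diag[OF on _ XE _ dX] Esub HONB_in[OF h] by auto
      qed
      have "v = (\<Sum>\<sigma>\<in>UNIV. hs_inner (e \<sigma>) ?X *s f \<sigma>)" by (rule repr)
      also have "\<dots> = (\<Sum>\<sigma>\<in>D. hs_inner (e \<sigma>) ?X *s f \<sigma>)"
        by (rule sum.mono_neutral_right) (auto simp: z)
      also have "\<dots> \<in> vec.span (f ` D)"
        by (intro vec.span_sum vec.span_scale vec.span_base) auto
      finally show "v \<in> vec.span (f ` D)" .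
    qed
    show "vec.span (f ` D) \<subseteq> F"
    proof (rule vec.span_minimal[OF _ subF])
      show "f ` D \<subseteq> F"
      proof
        fix v assume "v \<in> f ` D"
        then obtain \<sigma> where \<sigma>: "\<sigma> \<in> D" "v = f \<sigma>" by auto
        have "\<rho> h *v f \<sigma> = f \<sigma>" if "h \<in> Hs" for h
        proof (rule Tinj)
          have "T (\<rho> h *v f \<sigma>) = conj_action R h (e \<sigma>)" using Ti Tf by simp
          also have "\<dots> = e \<sigma>"
          proof (rule diag_fixed[of w "e \<sigma>" blk k R h, OF on])
            show "e \<sigma> \<in> End_block w blk k" using Esub HONB_in[OF h] by auto
            show "diagonal_in w blk k (e \<sigma>)" using \<sigma>(1) unfolding D_def by auto
            show "\<exists>c. R h *v w j = c *s w j" for j using ev[OF that] .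
            show "unitary_mat (R h)" by (rule U)
          qed
          finally show "T (\<rho> h *v f \<sigma>) = T (f \<sigma>)" by (simp add: Tf)
        qed
        thus "v \<in> F" unfolding F_def using \<sigma> by auto
      qed
    qed
  qed
  hence "fixed_dim \<rho> Hs = vec.dim (vec.span (f ` D))" unfolding fixed_dim_def F_def by simp
  also have "\<dots> = card (f ` D)"
    using vec.dim_eq_card_independent[OF vec.independent_mono[OF ind, of "f ` D"]] by auto
  also have "\<dots> = card D" using injf by (simp add: card_image inj_on_subset)
  finally show "card {\<sigma>. diagonal_in w blk k (e \<sigma>)} = fixed_dim \<rho> Hs" unfolding D_def by simp
qed

section \<open>Schur orthogonality for the coefficients\<close>

lemma cmod_le1_of_sq: "(cmod z)\<^sup>2 \<le> 1 \<Longrightarrow> cmod z \<le> 1"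
  using power2_le_imp_le[of "cmod z" 1] by simp

lemma schur_avg:
  fixes R :: "'g::t2_space \<Rightarrow> complex^'n^'n" and e :: "'s::finite \<Rightarrow> complex^'n^'n"
    and \<mu> :: "'g measure"
  assumes G: "compact_group mul z1 iv" and haar: "normalized_haar mul \<mu>"
    and rep: "cont_unitary_rep mul z1 R"
    and h: "HONB e E"
    and Eirr: "irreducible_submodule mscale (conj_action R) UNIV E"
  shows "integrable \<mu> (\<lambda>g. (cmod (hs_inner (e \<sigma>) (conj_action R g (e \<tau>))))\<^sup>2) \<and>
         (\<integral>g. (cmod (hs_inner (e \<sigma>) (conj_action R g (e \<tau>))))\<^sup>2 \<partial>\<mu>) = 1 / real CARD('s)"
proof -
  interpret M: Modules.module mscale by (rule module_mscale)
  have Rmul: "R (mul g g') = R g ** R g'" for g g' using rep unfolding cont_unitary_rep_def by auto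
  have Ru: "unitary_mat (R g)" for g using rep unfolding cont_unitary_rep_def by auto
  have Rc: "continuous_on UNIV (\<lambda>g. R g $ i $ j)" for i j using rep unfolding cont_unitary_rep_def by auto
  have Esub: "M.subspace E" and Einv: "\<And>g X. X \<in> E \<Longrightarrow> conj_action R g X \<in> E"
    using Eirr unfolding irreducible_submodule_def invariant_subspace_def by auto
  have Eirr3: "\<And>V. invariant_subspace mscale (conj_action R) UNIV V \<Longrightarrow> V \<subseteq> E \<Longrightarrow> V = {0} \<or> V = E"
    using Eirr unfolding irreducible_submodule_def by blast
  have eE: "e \<alpha> \<in> E" for \<alpha> by (rule HONB_in[OF h])
  have eon: "hs_inner (e \<alpha>) (e \<beta>) = (if \<alpha> = \<beta> then 1 else 0)" for \<alpha> \<beta> using h unfolding HONB_def by auto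
  define a where "a \<alpha> g = hs_inner (e \<alpha>) (conj_action R g (e \<tau>))" for \<alpha> g
  define Uf where "Uf g \<alpha> \<beta> = hs_inner (e \<alpha>) (conj_action R g (e \<beta>))" for g \<alpha> \<beta>
  have aform: "a \<alpha> = (\<lambda>g. \<Sum>i\<in>UNIV. \<Sum>j\<in>UNIV. cnj (e \<alpha> $i$j) *
      (\<Sum>l\<in>UNIV. (\<Sum>k\<in>UNIV. R g $i$k * e \<tau> $k$l) * cnj (R g $j$l)))" for \<alpha>
    by (simp add: a_def hs_inner_sum conj_action_nth fun_eq_iff)
  have acont: "continuous_on UNIV (a \<alpha>)" for \<alpha>
    unfolding aform by (intro continuous_intros Rc)
  have pars: "(\<Sum>\<alpha>\<in>UNIV. cnj (a \<alpha> g) * a \<alpha> g) = 1" for g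
  proof -
    let ?Y = "conj_action R g (e \<tau>)"
    have "hs_inner ?Y ?Y = hs_inner (e \<tau>) (e \<tau>)" by (rule hs_inner_conj_action[of R g, OF Ru])
    also have "\<dots> = 1" by (simp add: eon)
    finally show ?thesis using HONB_parseval[OF h Einv[OF eE] Einv[OF eE]] unfolding a_def by simp
  qed
  have parsR: "(\<Sum>\<alpha>\<in>UNIV. (cmod (a \<alpha> g))\<^sup>2) = 1" for g
  proof -
    have "complex_of_real (\<Sum>\<alpha>\<in>UNIV. (cmod (a \<alpha> g))\<^sup>2) = (\<Sum>\<alpha>\<in>UNIV. cnj (a \<alpha> g) * a \<alpha> g)"
      by (simp only: of_real_sum cnj_mult_self)
    thus ?thesis using pars[of g] by (metis of_real_eq_1_iff)
  qed
  have bnd: "cmod (a \<alpha> g) \<le> 1" for \<alpha> g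
  proof -
    have "(cmod (a \<alpha> g))\<^sup>2 \<le> (\<Sum>\<alpha>\<in>UNIV. (cmod (a \<alpha> g))\<^sup>2)"
      by (rule member_le_sum) auto
    thus ?thesis using parsR[of g] by (intro cmod_le1_of_sq) simp
  qed
  have fin: "finite_measure \<mu>" by (rule haar_finite[OF haar])
  have pcont: "continuous_on UNIV (\<lambda>g. a \<alpha> g * cnj (a \<beta> g))" for \<alpha> \<beta>
    by (intro continuous_intros acont)
  have pmeasB: "(\<lambda>g. a \<alpha> g * cnj (a \<beta> g)) \<in> borel_measurable borel" for \<alpha> \<beta>
    by (rule borel_measurable_continuous_onI[OF pcont])
  have intg: "integrable \<mu> (\<lambda>g. a \<alpha> g * cnj (a \<beta> g))" for \<alpha> \<beta>
  proof (rule finite_measure.integrable_const_bound[OF fin, where B=1])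
    show "AE x in \<mu>. norm (a \<alpha> x * cnj (a \<beta> x)) \<le> 1"
      using bnd by (auto simp: norm_mult intro!: mult_le_one)
    show "(\<lambda>g. a \<alpha> g * cnj (a \<beta> g)) \<in> borel_measurable \<mu>"
      by (rule haar_meas_cong[OF haar pmeasB])
  qed
  have F1: "a \<alpha> (mul g' g) = (\<Sum>\<beta>\<in>UNIV. Uf g' \<alpha> \<beta> * a \<beta> g)" for \<alpha> g g'
  proof -
    have ex: "conj_action R g (e \<tau>) = (\<Sum>\<beta>\<in>UNIV. mscale (a \<beta> g) (e \<beta>))"
      unfolding a_def by (rule HONB_expand[OF h Einv[OF eE]])
    have "a \<alpha> (mul g' g) = hs_inner (e \<alpha>) (conj_action R g' (conj_action R g (e \<tau>)))"
      unfolding a_def by (simp add: conj_action_mul[of R mul g' g, OF Rmul])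
    also have "\<dots> = hs_inner (e \<alpha>) (\<Sum>\<beta>\<in>UNIV. mscale (a \<beta> g) (conj_action R g' (e \<beta>)))"
      by (simp only: ex conj_action_sum[OF finite] conj_action_mscale)
    also have "\<dots> = (\<Sum>\<beta>\<in>UNIV. Uf g' \<alpha> \<beta> * a \<beta> g)"
      by (simp add: hs_inner_sum_right Uf_def mult.commute)
    finally show ?thesis .
  qed
  define Mm where "Mm \<alpha> \<beta> = (\<integral>g. a \<alpha> g * cnj (a \<beta> g) \<partial>\<mu>)" for \<alpha> \<beta>
  have F2: "Mm \<alpha> \<beta> = (\<Sum>\<gamma>\<in>UNIV. \<Sum>\<delta>\<in>UNIV. (Uf g' \<alpha> \<gamma> * cnj (Uf g' \<beta> \<delta>)) * Mm \<gamma> \<delta>)" for \<alpha> \<beta> g'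
  proof -
    have "Mm \<alpha> \<beta> = (\<integral>g. a \<alpha> (mul g' g) * cnj (a \<beta> (mul g' g)) \<partial>\<mu>)"
      unfolding Mm_def
      using haar_integral_invariant[OF G haar pmeasB[of \<alpha> \<beta>], of g'] by simp
    also have "\<dots> = (\<integral>g. (\<Sum>\<gamma>\<in>UNIV. \<Sum>\<delta>\<in>UNIV. (Uf g' \<alpha> \<gamma> * cnj (Uf g' \<beta> \<delta>)) * (a \<gamma> g * cnj (a \<delta> g))) \<partial>\<mu>)"
    proof (rule Bochner_Integration.integral_cong[OF refl])
      fix g
      show "a \<alpha> (mul g' g) * cnj (a \<beta> (mul g' g)) =
        (\<Sum>\<gamma>\<in>UNIV. \<Sum>\<delta>\<in>UNIV. (Uf g' \<alpha> \<gamma> * cnj (Uf g' \<beta> \<delta>)) * (a \<gamma> g * cnj (a \<delta> g)))"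
        unfolding F1 by (simp add: sum_product algebra_simps)
    qed
    also have "\<dots> = (\<Sum>\<gamma>\<in>UNIV. \<Sum>\<delta>\<in>UNIV. (Uf g' \<alpha> \<gamma> * cnj (Uf g' \<beta> \<delta>)) * Mm \<gamma> \<delta>)"
      unfolding Mm_def
      by (simp add: Bochner_Integration.integral_sum intg)
    finally show ?thesis .
  qed
  define Mv :: "complex^'s^'s" where "Mv = (\<chi> \<alpha> \<beta>. Mm \<alpha> \<beta>)"
  define Uv :: "'g \<Rightarrow> complex^'s^'s" where "Uv g = (\<chi> \<alpha> \<beta>. Uf g \<alpha> \<beta>)" for g
  have F2m: "Mv = Uv g' ** Mv ** adj (Uv g')" for g'
  proof -
    have "(Uv g' ** Mv ** adj (Uv g')) $ \<alpha> $ \<beta> = Mm \<alpha> \<beta>" for \<alpha> \<beta>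
    proof -
      have "(Uv g' ** Mv ** adj (Uv g')) $ \<alpha> $ \<beta>
          = (\<Sum>\<delta>\<in>UNIV. \<Sum>\<gamma>\<in>UNIV. (Uf g' \<alpha> \<gamma> * cnj (Uf g' \<beta> \<delta>)) * Mm \<gamma> \<delta>)"
        by (simp add: Mv_def Uv_def adj_def matrix_matrix_mult_def sum_distrib_left sum_distrib_right algebra_simps)
      also have "\<dots> = (\<Sum>\<gamma>\<in>UNIV. \<Sum>\<delta>\<in>UNIV. (Uf g' \<alpha> \<gamma> * cnj (Uf g' \<beta> \<delta>)) * Mm \<gamma> \<delta>)"
        by (rule sum.swap)
      also have "\<dots> = Mm \<alpha> \<beta>" by (rule F2[symmetric])
      finally show ?thesis .
    qed
    thus ?thesis by (simp add: Mv_def Finite_Cartesian_Product.vec_eq_iff)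
  qed
  have F3: "adj (Uv g') ** Uv g' = mat 1" for g'
  proof -
    have "(adj (Uv g') ** Uv g') $ \<gamma> $ \<delta> = (if \<gamma> = \<delta> then 1 else 0)" for \<gamma> \<delta>
    proof -
      have "(adj (Uv g') ** Uv g') $ \<gamma> $ \<delta> = (\<Sum>\<alpha>\<in>UNIV. cnj (Uf g' \<alpha> \<gamma>) * Uf g' \<alpha> \<delta>)"
        by (simp add: Uv_def adj_def matrix_matrix_mult_def)
      also have "\<dots> = hs_inner (conj_action R g' (e \<gamma>)) (conj_action R g' (e \<delta>))"
        unfolding Uf_def by (rule HONB_parseval[OF h Einv[OF eE] Einv[OF eE], symmetric])
      also have "\<dots> = (if \<gamma> = \<delta> then 1 else 0)" by (simp add: hs_inner_conj_action[of R g', OF Ru] eon)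
      finally show ?thesis .
    qed
    thus ?thesis by (simp add: Finite_Cartesian_Product.vec_eq_iff Finite_Cartesian_Product.mat_def)
  qed
  have F4: "Mv ** Uv g' = Uv g' ** Mv" for g'
  proof -
    have "Mv ** Uv g' = (Uv g' ** Mv ** adj (Uv g')) ** Uv g'"
      using arg_cong[OF F2m[of g'], of "\<lambda>X. X ** Uv g'"] .
    also have "\<dots> = Uv g' ** Mv ** (adj (Uv g') ** Uv g')" by (simp add: matrix_mul_assoc)
    also have "\<dots> = Uv g' ** Mv" by (simp add: F3)
    finally show ?thesis .
  qed
  obtain v l where vnz: "\<exists>i. v i \<noteq> 0" and vl: "\<forall>i. (\<Sum>j\<in>UNIV. Mm i j * v j) = l * v i"
    using ex_eigen[of Mm] by blast
  define vv :: "complex^'s" where "vv = (\<chi> i. v i)"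
  have Mvv: "Mv *v vv = l *s vv"
    using vl by (simp add: Mv_def vv_def matrix_vector_mult_def Finite_Cartesian_Product.vec_eq_iff)
  define coord :: "complex^'n^'n \<Rightarrow> complex^'s" where "coord X = (\<chi> \<alpha>. hs_inner (e \<alpha>) X)" for X
  have coord_add: "coord (X + Y) = coord X + coord Y" for X Y
    by (simp add: coord_def Finite_Cartesian_Product.vec_eq_iff hs_inner_add_right)
  have coord_scale: "coord (mscale c X) = c *s coord X" for c X
    by (simp add: coord_def Finite_Cartesian_Product.vec_eq_iff)
  have coord_zero: "coord 0 = 0"
    by (simp add: coord_def Finite_Cartesian_Product.vec_eq_iff)
  have coord_act: "coord (conj_action R g' X) = Uv g' *v coord X" if X: "X \<in> E" for g' X
  proof -
    have "hs_inner (e \<alpha>) (conj_action R g' X) = (\<Sum>\<beta>\<in>UNIV. Uf g' \<alpha> \<beta> * hs_inner (e \<beta>) X)" for \<alpha>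
    proof -
      have "hs_inner (e \<alpha>) (conj_action R g' X)
          = hs_inner (e \<alpha>) (conj_action R g' (\<Sum>\<beta>\<in>UNIV. mscale (hs_inner (e \<beta>) X) (e \<beta>)))"
        using HONB_expand[OF h X] by simp
      also have "\<dots> = (\<Sum>\<beta>\<in>UNIV. Uf g' \<alpha> \<beta> * hs_inner (e \<beta>) X)"
        by (simp add: conj_action_sum conj_action_mscale hs_inner_sum_right Uf_def mult.commute)
      finally show ?thesis .
    qed
    thus ?thesis by (simp add: coord_def Uv_def matrix_vector_mult_def Finite_Cartesian_Product.vec_eq_iff)
  qed
  define V where "V = {X \<in> E. Mv *v coord X = l *s coord X}"
  have Vinv: "invariant_subspace mscale (conj_action R) UNIV V"
    unfolding invariant_subspace_def
  proof (intro conjI ballI)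
    show "M.subspace V"
    proof (rule M.subspaceI)
      show "0 \<in> V" unfolding V_def using M.subspace_0[OF Esub] by (simp add: coord_zero)
      fix X Y assume X: "X \<in> V" and Y: "Y \<in> V"
      thus "X + Y \<in> V" unfolding V_def using M.subspace_add[OF Esub]
        by (simp add: coord_add matrix_vector_right_distrib vector_add_ldistrib)
    next
      fix c X assume X: "X \<in> V"
      thus "mscale c X \<in> V" unfolding V_def using M.subspace_scale[OF Esub]
        by (auto simp: coord_scale mv_scale vector_smult_assoc mult.commute)
    qed
    fix g' X assume X: "X \<in> V"
    hence XE: "X \<in> E" and XV: "Mv *v coord X = l *s coord X" unfolding V_def by auto
    have "Mv *v coord (conj_action R g' X) = (Mv ** Uv g') *v coord X"
      by (simp add: coord_act[OF XE] matrix_vector_mul_assoc)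
    also have "\<dots> = Uv g' *v (Mv *v coord X)" by (simp add: F4 matrix_vector_mul_assoc)
    also have "\<dots> = l *s coord (conj_action R g' X)" by (simp add: XV mv_scale coord_act[OF XE])
    finally show "conj_action R g' X \<in> V" unfolding V_def using Einv[OF XE] by simp
  qed
  define X0 where "X0 = (\<Sum>\<beta>\<in>UNIV. mscale (v \<beta>) (e \<beta>))"
  have X0E: "X0 \<in> E" unfolding X0_def by (rule HONB_comb_in[OF h])
  have cX0: "coord X0 = vv"
    unfolding X0_def coord_def vv_def using HONB_coord_comb[OF h]
    by (simp add: Finite_Cartesian_Product.vec_eq_iff)
  have X0V: "X0 \<in> V" unfolding V_def using X0E cX0 Mvv by simp
  have X0nz: "X0 \<noteq> 0"
  proof
    assume "X0 = 0"
    hence "vv = 0" using cX0 coord_zero by simp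
    thus False using vnz by (simp add: vv_def Finite_Cartesian_Product.vec_eq_iff)
  qed
  have VE: "V = E"
    using Eirr3[OF Vinv] X0V X0nz unfolding V_def by auto
  have Mdiag: "Mm \<alpha> \<gamma> = (if \<alpha> = \<gamma> then l else 0)" for \<alpha> \<gamma>
  proof -
    have "e \<gamma> \<in> V" using VE eE by simp
    hence "Mv *v coord (e \<gamma>) = l *s coord (e \<gamma>)" unfolding V_def by simp
    hence "(Mv *v coord (e \<gamma>)) $ \<alpha> = (l *s coord (e \<gamma>)) $ \<alpha>" by simp
    thus ?thesis by (simp add: coord_def eon Mv_def matrix_vector_mult_def)
  qed
  have tr: "(\<Sum>\<alpha>\<in>UNIV. Mm \<alpha> \<alpha>) = 1"
  proof -
    have "(\<Sum>\<alpha>\<in>UNIV. Mm \<alpha> \<alpha>) = (\<integral>g. (\<Sum>\<alpha>\<in>UNIV. a \<alpha> g * cnj (a \<alpha> g)) \<partial>\<mu>)"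
      unfolding Mm_def by (simp add: Bochner_Integration.integral_sum intg)
    also have "\<dots> = (\<integral>g. 1 \<partial>\<mu>)"
      using pars by (simp add: mult.commute)
    also have "\<dots> = 1" using haar_measure_one[OF haar] by simp
    finally show ?thesis .
  qed
  hence l1: "of_nat CARD('s) * l = 1" using Mdiag by simp
  have sqc: "complex_of_real ((cmod (a \<sigma> g))\<^sup>2) = a \<sigma> g * cnj (a \<sigma> g)" for g
    by (rule complex_norm_square)
  have sqmeas: "(\<lambda>g. (cmod (a \<sigma> g))\<^sup>2) \<in> borel_measurable \<mu>"
    by (rule haar_meas_cong[OF haar borel_measurable_continuous_onI])
       (intro continuous_intros acont)
  have sqint: "integrable \<mu> (\<lambda>g. (cmod (a \<sigma> g))\<^sup>2)"
  proof (rule finite_measure.integrable_const_bound[OF fin _ sqmeas, where B=1])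
    show "AE x in \<mu>. norm ((cmod (a \<sigma> x))\<^sup>2) \<le> 1"
      using bnd by (auto intro!: power_le_one)
  qed
  have "complex_of_real (\<integral>g. (cmod (a \<sigma> g))\<^sup>2 \<partial>\<mu>) = (\<integral>g. complex_of_real ((cmod (a \<sigma> g))\<^sup>2) \<partial>\<mu>)"
    by (rule integral_complex_of_real[symmetric])
  also have "\<dots> = Mm \<sigma> \<sigma>" unfolding Mm_def sqc by simp
  also have "\<dots> = l" by (simp add: Mdiag)
  also have "\<dots> = complex_of_real (1 / real CARD('s))"
    using l1 by (simp add: field_simps)
  finally have "(\<integral>g. (cmod (a \<sigma> g))\<^sup>2 \<partial>\<mu>) = 1 / real CARD('s)"
    by (simp only: of_real_eq_iff)
  thus ?thesis using sqint unfolding a_def by simp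
qed

hide_const LinearCombinations.module.span

theorem mainTheorem7:
  fixes mul :: "'g::t2_space \<Rightarrow> 'g \<Rightarrow> 'g" and one :: 'g and iv :: "'g \<Rightarrow> 'g"
    and \<mu> :: "'g measure"
    and R :: "'g \<Rightarrow> complex^'n^'n"
    and Hs :: "'g set"
    and w :: "'n \<Rightarrow> complex^'n" and blk :: "'n \<Rightarrow> 'k" and k0 :: 'k
    and E :: "(complex^'n^'n) set"
    and \<rho> :: "'g \<Rightarrow> complex^'d^'d"
    and e :: "'s::finite \<Rightarrow> complex^'n^'n"
  assumes G: "compact_group mul one iv"
    and haar: "normalized_haar mul \<mu>"
    and rep: "cont_unitary_rep mul one R"
    and H: "closed_abelian_subgroup mul one iv Hs"
    and W: "NDCSE R Hs w blk"
    and k0: "k0 \<in> range blk"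
    and E_sub: "E \<subseteq> End_block w blk k0"
    and E_irr: "irreducible_submodule mscale (conj_action R) UNIV E"
    and lam_rep: "cont_unitary_rep mul one \<rho>"
    and lam_irr: "irreducible_submodule (*s) (\<lambda>g v. \<rho> g *v v) UNIV UNIV"
    and E_iso: "isomorphic_modules (*s) (\<lambda>g v. \<rho> g *v v) UNIV mscale (conj_action R) E UNIV"
    and e_in: "\<And>\<sigma>. e \<sigma> \<in> E"
    and e_on: "\<And>\<sigma> \<tau>. hs_inner (e \<sigma>) (e \<tau>) = (if \<sigma> = \<tau> then 1 else 0)"
    and e_span: "module.span mscale (range e) = E"
    and e_diag: "\<And>\<sigma>. diagonal_in w blk k0 (e \<sigma>) \<or> zero_diagonal_in w blk k0 (e \<sigma>)"
  shows "\<forall>\<tau>. (\<integral>g. (\<Sum>\<sigma>\<in>{\<sigma>. diagonal_in w blk k0 (e \<sigma>)}.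
               (cmod (trace (adj (e \<sigma>) ** R g ** e \<tau> ** adj (R g))))\<^sup>2) \<partial>\<mu>)
             = real (fixed_dim \<rho> Hs) / real CARD('d)"
proof
  fix \<tau>
  have on: "ONB w" using W unfolding NDCSE_def ONB_def by blast
  have ev: "\<And>j h. h \<in> Hs \<Longrightarrow> \<exists>c. R h *v w j = c *s w j" using W unfolding NDCSE_def by blast
  have mf: "multiplicity_free (*s) (\<lambda>g v. R g *v v) Hs (block_space w blk k0)"
    using W k0 unfolding NDCSE_def by blast
  have U: "\<And>h. unitary_mat (R h)" using rep unfolding cont_unitary_rep_def by blast
  have hE: "HONB e E" unfolding HONB_def using e_on e_span by blast
  obtain T where TL: "Vector_Spaces.linear (*s) mscale T" and Tb: "bij_betw T UNIV E"
    and Ti: "\<forall>g\<in>UNIV. \<forall>x\<in>UNIV. T (\<rho> g *v x) = conj_action R g (T x)"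
    using E_iso unfolding isomorphic_modules_def by blast
  have d1: "CARD('s) = CARD('d)"
    by (rule dims(1)[OF hE TL Tb Ti on ev U mf E_sub e_diag])
  have d2: "card {\<sigma>. diagonal_in w blk k0 (e \<sigma>)} = fixed_dim \<rho> Hs"
    by (rule dims(2)[OF hE TL Tb Ti on ev U mf E_sub e_diag])
  define D where "D = {\<sigma>. diagonal_in w blk k0 (e \<sigma>)}"
  have sa: "integrable \<mu> (\<lambda>g. (cmod (hs_inner (e \<sigma>) (conj_action R g (e \<tau>))))\<^sup>2) \<and>
         (\<integral>g. (cmod (hs_inner (e \<sigma>) (conj_action R g (e \<tau>))))\<^sup>2 \<partial>\<mu>) = 1 / real CARD('s)" for \<sigma>
    by (rule schur_avg[OF G haar rep hE E_irr])
  have "(\<integral>g. (\<Sum>\<sigma>\<in>D. (cmod (trace (adj (e \<sigma>) ** R g ** e \<tau> ** adj (R g))))\<^sup>2) \<partial>\<mu>)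
      = (\<integral>g. (\<Sum>\<sigma>\<in>D. (cmod (hs_inner (e \<sigma>) (conj_action R g (e \<tau>))))\<^sup>2) \<partial>\<mu>)"
    by (simp only: trace_goal_eq)
  also have "\<dots> = (\<Sum>\<sigma>\<in>D. \<integral>g. (cmod (hs_inner (e \<sigma>) (conj_action R g (e \<tau>))))\<^sup>2 \<partial>\<mu>)"
    by (rule Bochner_Integration.integral_sum) (use sa in blast)
  also have "\<dots> = (\<Sum>\<sigma>\<in>D. 1 / real CARD('s))" using sa by simp
  also have "\<dots> = real (card D) / real CARD('s)" by simp
  also have "\<dots> = real (fixed_dim \<rho> Hs) / real CARD('d)" using d1 d2 unfolding D_def by simp
  finally show "(\<integral>g. (\<Sum>\<sigma>\<in>{\<sigma>. diagonal_in w blk k0 (e \<sigma>)}.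
               (cmod (trace (adj (e \<sigma>) ** R g ** e \<tau> ** adj (R g))))\<^sup>2) \<partial>\<mu>)
             = real (fixed_dim \<rho> Hs) / real CARD('d)" unfolding D_def .
qed

end
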